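(* Let $p\ge1$ and $s>0$ be integers and let $S=\{a_1,\dots,a_{3p}\}$ be a multiset of positive integers with $s/4<a_i<s/2$ for all $i$ and $\sum_{i=1}^{3p}a_i=sp$. Let $\mathbb T=(\mathbb V,\mathbb E)$ be the spider with a center vertex $r$ and, for each $i$, a leg (a path starting at $r$) with exactly $a_i$ edges, the legs being internally disjoint. Then the following are equivalent: (i) $S$ can be partitioned into $p$ sub-multisets of size exactly three, each summing to $s$; (ii) $\mathbb T$ has an $(s+1)$-completion set of size $\frac{ps(s-1)}{2}$; (iii) $\mathbb E$ can be partitioned into $p$ edge-disjoint subtrees of $\mathbb T$, each having exactly $s$ edges.
   Context: A connected graph $H$ has a $(k,1)$-cover if every edge of $H$ lies in at least one clique of order $k$. For a connected graph $G=(V,E)$, a set $E'\subseteq(V\times V)\setminus E$ of non-edges is a $k$-completion set of $G$ if $G\cup E'$ has a $(k,1)$-cover. *)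

theory Defs
  imports Main "HOL-Library.Multiset"
begin

definition is_edge_set :: "'v set \<Rightarrow> 'v set set \<Rightarrow> bool" where
  "is_edge_set V E \<longleftrightarrow> (\<forall>e\<in>E. e \<subseteq> V \<and> card e = 2)"

definition adj_rel :: "'v set set \<Rightarrow> ('v \<times> 'v) set" where
  "adj_rel E = {(x, y). {x, y} \<in> E \<and> x \<noteq> y}"

definition connected_graph :: "'v set \<Rightarrow> 'v set set \<Rightarrow> bool" where
  "connected_graph V E \<longleftrightarrow> is_edge_set V E \<and>
     (\<forall>u\<in>V. \<forall>v\<in>V. (u, v) \<in> (adj_rel E)\<^sup>*)"

definition is_clique :: "'v set set \<Rightarrow> 'v set \<Rightarrow> bool" where
  "is_clique E C \<longleftrightarrow> (\<forall>x\<in>C. \<forall>y\<in>C. x \<noteq> y \<longrightarrow> {x, y} \<in> E)"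

definition has_k1_cover :: "nat \<Rightarrow> 'v set \<Rightarrow> 'v set set \<Rightarrow> bool" where
  "has_k1_cover k V E \<longleftrightarrow> connected_graph V E \<and>
     (\<forall>e\<in>E. \<exists>C. C \<subseteq> V \<and> finite C \<and> card C = k \<and> e \<subseteq> C \<and> is_clique E C)"

definition non_edges :: "'v set \<Rightarrow> 'v set set \<Rightarrow> 'v set set" where
  "non_edges V E = {{x, y} | x y. x \<in> V \<and> y \<in> V \<and> x \<noteq> y} - E"

definition is_completion_set :: "nat \<Rightarrow> 'v set \<Rightarrow> 'v set set \<Rightarrow> 'v set set \<Rightarrow> bool" where
  "is_completion_set k V E E' \<longleftrightarrow> E' \<subseteq> non_edges V E \<and> has_k1_cover k V (E \<union> E')"

text \<open>A tree given by its edge set F (vertex set = vertices covered by F):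
  nonempty, connected and acyclic, where acyclic is expressed as: no edge lies on a cycle,
  i.e. removing any edge disconnects its two endpoints.\<close>
definition is_tree_edges :: "'v set set \<Rightarrow> bool" where
  "is_tree_edges F \<longleftrightarrow> F \<noteq> {} \<and> finite F \<and> connected_graph (\<Union>F) F \<and>
     (\<forall>x y. {x, y} \<in> F \<longrightarrow> x \<noteq> y \<longrightarrow> (x, y) \<notin> (adj_rel (F - {{x, y}}))\<^sup>*)"

text \<open>The spider with legs of lengths as!0, ..., as!(n-1): center None,
  the vertices of leg i are Some (i,1), ..., Some (i, as!i), with Some (i,1) adjacent to the center.\<close>
definition spider_V :: "nat list \<Rightarrow> (nat \<times> nat) option set" where
  "spider_V as = insert None {Some (i, j) | i j. i < length as \<and> 1 \<le> j \<and> j \<le> as ! i}"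

definition spider_E :: "nat list \<Rightarrow> (nat \<times> nat) option set set" where
  "spider_E as =
     {{None, Some (i, 1)} | i. i < length as \<and> 1 \<le> as ! i} \<union>
     {{Some (i, j), Some (i, Suc j)} | i j. i < length as \<and> 1 \<le> j \<and> Suc j \<le> as ! i}"

end

theory Submission
  imports Defs
begin

definition vx :: "nat \<Rightarrow> nat \<Rightarrow> (nat \<times> nat) option" where
  "vx i k = (if k = 0 then None else Some (i, k))"

definition legE :: "nat list \<Rightarrow> nat \<Rightarrow> (nat \<times> nat) option set set" where
  "legE as i = (\<lambda>k. {vx i k, vx i (Suc k)}) ` {..<as!i}"

definition legV :: "nat list \<Rightarrow> nat \<Rightarrow> (nat \<times> nat) option set" where
  "legV as i = Some ` ({i} \<times> {1..as!i})"

lemma vx_Suc[simp]: "vx i (Suc k) = Some (i, Suc k)" by (simp add: vx_def)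
lemma vx_0[simp]: "vx i 0 = None" by (simp add: vx_def)

lemma spider_E_eq: "spider_E as = (\<Union>i<length as. legE as i)"
proof (rule set_eqI)
  fix e
  show "e \<in> spider_E as \<longleftrightarrow> e \<in> (\<Union>i<length as. legE as i)"
  proof
    assume "e \<in> spider_E as"
    then consider (a) i where "e = {None, Some (i, 1)}" "i < length as" "1 \<le> as ! i"
      | (b) i j where "e = {Some (i, j), Some (i, Suc j)}" "i < length as" "1 \<le> j" "Suc j \<le> as ! i"
      unfolding spider_E_def by (elim UnE CollectE exE conjE) metis+
    then show "e \<in> (\<Union>i<length as. legE as i)"
    proof cases
      case (a i)
      then show ?thesis by (intro UN_I[of i]) (auto simp: legE_def intro!: image_eqI[of _ _ 0])
    next
      case (b i j)
      then show ?thesis by (intro UN_I[of i]) (auto simp: legE_def vx_def intro!: image_eqI[of _ _ j])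
    qed
  next
    assume "e \<in> (\<Union>i<length as. legE as i)"
    then obtain i k where ik: "i < length as" "k < as!i" "e = {vx i k, vx i (Suc k)}"
      unfolding legE_def by auto
    show "e \<in> spider_E as"
    proof (cases k)
      case 0
      then show ?thesis using ik unfolding spider_E_def by auto
    next
      case (Suc j)
      then have "e = {Some (i, Suc j), Some (i, Suc (Suc j))}" using ik by (simp add: vx_def)
      then show ?thesis using ik Suc unfolding spider_E_def by (intro UnI2 CollectI exI[of _ i] exI[of _ "Suc j"]) simp
    qed
  qed
qed

lemma None_notin_legV[simp]: "None \<notin> legV as i" by (auto simp: legV_def)

lemma spider_V_eq: "spider_V as = insert None (\<Union>i<length as. legV as i)"
  unfolding spider_V_def legV_def by auto

lemma legV_disj: "i \<noteq> i' \<Longrightarrow> legV as i \<inter> legV as i' = {}"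
  by (auto simp: legV_def)

lemma card_legV: "card (legV as i) = as!i"
  unfolding legV_def by (subst card_image) (auto simp: card_cartesian_product)

lemma finite_legV[simp]: "finite (legV as i)" by (simp add: legV_def)
lemma finite_legE[simp]: "finite (legE as i)" by (simp add: legE_def)

lemma vx_in_legV: "1 \<le> k \<Longrightarrow> k \<le> as!i \<Longrightarrow> vx i k \<in> legV as i"
  by (auto simp: vx_def legV_def)

lemma legE_sub: "e \<in> legE as i \<Longrightarrow> e \<subseteq> insert None (legV as i)"
  unfolding legE_def by (auto simp: vx_def legV_def split: if_splits)

lemma legE_card2: "e \<in> legE as i \<Longrightarrow> card e = 2"
  unfolding legE_def by (auto simp: vx_def)

lemma legE_disj: "i \<noteq> i' \<Longrightarrow> legE as i \<inter> legE as i' = {}"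
  unfolding legE_def by (auto simp: vx_def doubleton_eq_iff split: if_splits)

lemma card_legE: "card (legE as i) = as!i"
  unfolding legE_def
  by (subst card_image) (auto simp: inj_on_def vx_def doubleton_eq_iff split: if_splits)

lemma card_spider_E: "card (spider_E as) = sum_list as"
  unfolding spider_E_eq
  by (subst card_UN_disjoint) (auto simp: legE_disj card_legE sum_list_sum_nth atLeast0LessThan)

lemma finite_spider_V[simp]: "finite (spider_V as)" by (simp add: spider_V_eq)
lemma finite_spider_E[simp]: "finite (spider_E as)" by (simp add: spider_E_eq)

lemma card_spider_V: "card (spider_V as) = Suc (sum_list as)"
  unfolding spider_V_eq
  by (subst card_insert_disjoint) (auto simp: card_UN_disjoint legV_disj card_legV sum_list_sum_nth atLeast0LessThan)

lemma crossing:
  assumes "(x, y) \<in> (adj_rel E)\<^sup>*" "(x \<in> S) \<noteq> (y \<in> S)"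
  shows "\<exists>a b. {a, b} \<in> E \<and> a \<in> S \<and> b \<notin> S"
  using assms
proof (induction rule: rtrancl_induct)
  case base
  then show ?case by simp
next
  case (step y z)
  show ?case
  proof (cases "(x \<in> S) = (y \<in> S)")
    case True
    with step have yz: "(y \<in> S) \<noteq> (z \<in> S)" by blast
    from step(2) have "{y, z} \<in> E" by (simp add: adj_rel_def)
    then show ?thesis using yz by (metis insert_commute)
  next
    case False
    then show ?thesis using step by blast
  qed
qed

lemma adj_rel_mono: "E1 \<subseteq> E2 \<Longrightarrow> adj_rel E1 \<subseteq> adj_rel E2"
  by (auto simp: adj_rel_def)

lemma rtrancl_adj_mono: "E1 \<subseteq> E2 \<Longrightarrow> (x, y) \<in> (adj_rel E1)\<^sup>* \<Longrightarrow> (x, y) \<in> (adj_rel E2)\<^sup>*"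
  using rtrancl_mono[OF adj_rel_mono] by blast

lemma spider_edge_cases:
  assumes "e \<in> spider_E as"
  obtains i k where "i < length as" "k < as!i" "e = {vx i k, vx i (Suc k)}"
  using assms unfolding spider_E_eq legE_def by auto

lemma spider_acyclic:
  assumes "{x, y} \<in> spider_E as" "x \<noteq> y"
  shows "(x, y) \<notin> (adj_rel (spider_E as - {{x, y}}))\<^sup>*"
proof
  assume path: "(x, y) \<in> (adj_rel (spider_E as - {{x, y}}))\<^sup>*"
  obtain i k where ik: "i < length as" "k < as!i" "{x, y} = {vx i k, vx i (Suc k)}"
    using assms(1) by (rule spider_edge_cases)
  define S where "S = {Some (i, m) | m. Suc k \<le> m}"
  have "(x \<in> S) \<noteq> (y \<in> S)"
    using ik(3) assms(2) by (auto simp: S_def vx_def doubleton_eq_iff split: if_splits)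
  from crossing[OF path this] obtain a b where
    ab: "{a, b} \<in> spider_E as" "{a, b} \<noteq> {x, y}" "a \<in> S" "b \<notin> S" by blast
  obtain i' k' where ik': "i' < length as" "k' < as!i'" "{a, b} = {vx i' k', vx i' (Suc k')}"
    using ab(1) by (rule spider_edge_cases)
  from ab(3) obtain m where m: "a = Some (i, m)" "Suc k \<le> m" by (auto simp: S_def)
  show False
  proof (cases "a = vx i' k'")
    case True
    then have "b = vx i' (Suc k')" using ik' m by (auto simp: doubleton_eq_iff vx_def split: if_splits)
    then show ?thesis using True m ab(4) by (auto simp: S_def vx_def split: if_splits)
  next
    case False
    then have a2: "a = vx i' (Suc k')" "b = vx i' k'" using ik' by (auto simp: doubleton_eq_iff)
    then have "i' = i" "Suc k' = m" using m by auto
    then have "k' = k" using ab(4) a2 m by (cases k') (auto simp: S_def vx_def)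
    then show ?thesis using ab(2) ik(3) a2 \<open>i' = i\<close> by (auto simp: insert_commute)
  qed
qed

fun pe :: "(nat \<times> nat) option \<Rightarrow> (nat \<times> nat) option set" where
  "pe None = {}"
| "pe (Some (i, k)) = {vx i (k - 1), Some (i, k)}"

fun par :: "(nat \<times> nat) option \<Rightarrow> (nat \<times> nat) option" where
  "par None = None"
| "par (Some (i, k)) = vx i (k - 1)"

lemma edges_inside:
  "{e \<in> spider_E as. e \<subseteq> S} \<subseteq> pe ` {c \<in> S. c \<noteq> None \<and> par c \<in> S}"
proof
  fix e assume "e \<in> {e \<in> spider_E as. e \<subseteq> S}"
  then have e: "e \<in> spider_E as" "e \<subseteq> S" by auto
  obtain i k where ik: "i < length as" "k < as!i" "e = {vx i k, vx i (Suc k)}"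
    using e(1) by (rule spider_edge_cases)
  show "e \<in> pe ` {c \<in> S. c \<noteq> None \<and> par c \<in> S}"
    using e(2) ik by (intro image_eqI[of _ _ "Some (i, Suc k)"]) auto
qed

lemma finite_edges_inside: "finite {e \<in> spider_E as. e \<subseteq> S}" by simp

lemma count_with_None:
  assumes "finite S" "None \<in> S"
  shows "card {e \<in> spider_E as. e \<subseteq> S} + 1 \<le> card S"
proof -
  have "card {e \<in> spider_E as. e \<subseteq> S} \<le> card (pe ` {c \<in> S. c \<noteq> None \<and> par c \<in> S})"
    by (rule card_mono[OF _ edges_inside]) (use assms in simp)
  also have "\<dots> \<le> card {c \<in> S. c \<noteq> None \<and> par c \<in> S}"
    by (rule card_image_le) (use assms in simp)
  also have "\<dots> \<le> card (S - {None})" by (rule card_mono) (use assms in auto)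
  also have "\<dots> = card S - 1" using assms by (simp add: card_Diff_singleton)
  finally have "card {e \<in> spider_E as. e \<subseteq> S} \<le> card S - 1" .
  moreover have "card S \<ge> 1" using assms by (auto simp: Suc_le_eq card_gt_0_iff)
  ultimately show ?thesis by linarith
qed

lemma count_two_legs:
  assumes "finite S" "None \<notin> S" "Some (i1, k1) \<in> S" "Some (i2, k2) \<in> S" "i1 \<noteq> i2"
  shows "card {e \<in> spider_E as. e \<subseteq> S} + 2 \<le> card S"
proof -
  define m1 where "m1 = (LEAST k. Some (i1, k) \<in> S)"
  define m2 where "m2 = (LEAST k. Some (i2, k) \<in> S)"
  have m1: "Some (i1, m1) \<in> S" unfolding m1_def by (rule LeastI) (rule assms(3))
  have m2: "Some (i2, m2) \<in> S" unfolding m2_def by (rule LeastI) (rule assms(4))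
  have p1: "par (Some (i1, m1)) \<notin> S"
  proof
    assume "par (Some (i1, m1)) \<in> S"
    then have a: "m1 - 1 \<noteq> 0" "Some (i1, m1 - 1) \<in> S" using assms(2) by (auto simp: vx_def split: if_splits)
    have "m1 \<le> m1 - 1" using Least_le[of "\<lambda>k. Some (i1, k) \<in> S" "m1 - 1"] a(2) m1_def by simp
    then show False using a(1) by simp
  qed
  have p2: "par (Some (i2, m2)) \<notin> S"
  proof
    assume "par (Some (i2, m2)) \<in> S"
    then have a: "m2 - 1 \<noteq> 0" "Some (i2, m2 - 1) \<in> S" using assms(2) by (auto simp: vx_def split: if_splits)
    have "m2 \<le> m2 - 1" using Least_le[of "\<lambda>k. Some (i2, k) \<in> S" "m2 - 1"] a(2) m2_def by simp
    then show False using a(1) by simp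
  qed
  have "card {e \<in> spider_E as. e \<subseteq> S} \<le> card (pe ` {c \<in> S. c \<noteq> None \<and> par c \<in> S})"
    by (rule card_mono[OF _ edges_inside]) (use assms in simp)
  also have "\<dots> \<le> card {c \<in> S. c \<noteq> None \<and> par c \<in> S}"
    by (rule card_image_le) (use assms in simp)
  also have "\<dots> \<le> card (S - {Some (i1, m1), Some (i2, m2)})"
    by (rule card_mono) (use assms p1 p2 in auto)
  also have "\<dots> = card S - card {Some (i1, m1), Some (i2, m2)}"
    using m1 m2 assms by (intro card_Diff_subset) auto
  also have "card {Some (i1, m1), Some (i2, m2)} = 2" using assms(5) by simp
  finally have "card {e \<in> spider_E as. e \<subseteq> S} \<le> card S - 2" .
  moreover have "card {Some (i1, m1), Some (i2, m2)} \<le> card S"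
    using m1 m2 assms by (intro card_mono) auto
  ultimately show ?thesis using assms(5) by simp
qed

lemma leg_boundary:
  assumes "{a, b} \<in> spider_E as" "a \<in> legV as i" "b \<notin> legV as i"
  shows "b = None \<and> a = Some (i, 1)"
proof -
  obtain i' k' where ik': "i' < length as" "k' < as!i'" "{a, b} = {vx i' k', vx i' (Suc k')}"
    using assms(1) by (rule spider_edge_cases)
  from assms(2) obtain m where m: "a = Some (i, m)" "1 \<le> m" "m \<le> as!i" by (auto simp: legV_def)
  show ?thesis
  proof (cases "a = vx i' k'")
    case True
    then have "b = vx i' (Suc k')" using ik' m by (auto simp: doubleton_eq_iff vx_def split: if_splits)
    then show ?thesis using True m ik' assms(3) by (auto simp: legV_def vx_def split: if_splits)
  next
    case False
    then have a2: "a = vx i' (Suc k')" "b = vx i' k'" using ik' by (auto simp: doubleton_eq_iff)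
    then have "i' = i" "Suc k' = m" using m by auto
    then show ?thesis using assms(3) a2 m by (cases k') (auto simp: legV_def vx_def)
  qed
qed

lemma legE_in_leg:
  assumes "e \<in> legE as i'" "e \<subseteq> insert None (legV as i)"
  shows "i' = i"
  using assms unfolding legE_def legV_def by auto

lemma mset_set_part:
  assumes "finite A" "mset_set A = M1 + M2"
  shows "M1 = mset_set (set_mset M1) \<and> M2 = mset_set (A - set_mset M1)"
proof -
  have c: "count M1 x + count M2 x = count (mset_set A) x" for x
    using assms(2) by (metis count_union)
  have le: "count (mset_set A) x \<le> 1" for x
    by (cases "x \<in> A") (use assms(1) in auto)
  have sub: "set_mset M1 \<subseteq> A"
  proof
    fix x assume "x \<in># M1"
    then have "count (mset_set A) x > 0" using c[of x] by (metis add_gr_0 count_greater_zero_iff)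
    then show "x \<in> A" by (metis count_mset_set(3) less_irrefl)
  qed
  have fin: "finite (set_mset M1)" by simp
  show ?thesis
  proof
    show "M1 = mset_set (set_mset M1)"
    proof (rule multiset_eqI)
      fix x
      show "count M1 x = count (mset_set (set_mset M1)) x"
      proof (cases "x \<in># M1")
        case True
        have a: "0 < count M1 x" using True by simp
        have b: "count (mset_set (set_mset M1)) x = 1" using True by simp
        show ?thesis using a b c[of x] le[of x] by linarith
      next
        case False
        then show ?thesis by (simp add: count_eq_zero_iff)
      qed
    qed
    show "M2 = mset_set (A - set_mset M1)"
    proof (rule multiset_eqI)
      fix x
      have "count M2 x = (if x \<in> A - set_mset M1 then 1 else 0)"
      proof (cases "x \<in> A")
        case True
        then have sum1: "count M1 x + count M2 x = 1" using c[of x] assms(1) by simp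
        show ?thesis
        proof (cases "x \<in># M1")
          case True2: True
          have "0 < count M1 x" using True2 by simp
          then have "count M2 x = 0" using sum1 by linarith
          then show ?thesis using True2 by simp
        next
          case False2: False
          then have "count M1 x = 0" by (simp add: not_in_iff)
          then show ?thesis using sum1 False2 True by simp
        qed
      next
        case False
        then have "count M1 x + count M2 x = 0" using c[of x] by simp
        then show ?thesis using False by auto
      qed
      then show "count M2 x = count (mset_set (A - set_mset M1)) x"
        using assms(1) by simp
    qed
  qed
qed

lemma split_idx:
  "finite A \<Longrightarrow> image_mset h (mset_set A) = sum_list Bs \<Longrightarrow>
   \<exists>g. (\<forall>a\<in>A. g a < length Bs) \<and>
       (\<forall>j<length Bs. image_mset h (mset_set {a\<in>A. g a = j}) = Bs!j)"
proof (induction Bs arbitrary: A)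
  case Nil
  then have "A = {}" by (metis image_mset_is_empty_iff mset_set_empty_iff sum_list.Nil)
  then show ?case by simp
next
  case (Cons B Bs)
  from Cons.prems(2) have "image_mset h (mset_set A) = B + sum_list Bs" by simp
  from image_mset_eq_plusD[OF this] obtain M1 M2 where
    M: "mset_set A = M1 + M2" "B = image_mset h M1" "sum_list Bs = image_mset h M2" by blast
  define A1 where "A1 = set_mset M1"
  from mset_set_part[OF Cons.prems(1) M(1)] have M1: "M1 = mset_set A1" and M2: "M2 = mset_set (A - A1)"
    by (auto simp: A1_def)
  have A1A: "A1 \<subseteq> A"
    using M(1) Cons.prems(1) unfolding A1_def by (metis mset_subset_eq_add_left set_mset_mono finite_set_mset_mset_set)
  from Cons.IH[of "A - A1"] Cons.prems(1) M(3) M2 obtain g' where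
    g': "\<forall>a\<in>A - A1. g' a < length Bs"
        "\<forall>j<length Bs. image_mset h (mset_set {a\<in>A - A1. g' a = j}) = Bs!j" by auto
  define g where "g a = (if a \<in> A1 then 0 else Suc (g' a))" for a
  show ?case
  proof (intro exI[of _ g] conjI ballI allI impI)
    fix a assume "a \<in> A" then show "g a < length (B # Bs)" using g'(1) by (auto simp: g_def)
  next
    fix j assume j: "j < length (B # Bs)"
    show "image_mset h (mset_set {a \<in> A. g a = j}) = (B # Bs) ! j"
    proof (cases j)
      case 0
      then have "{a \<in> A. g a = j} = A1" using A1A by (auto simp: g_def)
      then show ?thesis using 0 M(2) M1 by simp
    next
      case (Suc j')
      then have "{a \<in> A. g a = j} = {a\<in>A - A1. g' a = j'}" by (auto simp: g_def)
      then show ?thesis using Suc g'(2) j by simp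
    qed
  qed
qed

lemma mset_as_image: "mset as = image_mset (nth as) (mset_set {..<length as})"
proof -
  have "mset as = mset (map (nth as) [0..<length as])" by (simp add: map_nth)
  also have "\<dots> = image_mset (nth as) (mset_set {..<length as})" by (simp add: lessThan_atLeast0)
  finally show ?thesis .
qed

lemma from_P:
  assumes "size P = p" "sum_mset P = mset as" "\<forall>B\<in>#P. sum_mset B = s"
  shows "\<exists>g. (\<forall>i<length as. g i < p) \<and>
             (\<forall>j<p. (\<Sum>i\<in>{i. i < length as \<and> g i = j}. as!i) = s)"
proof -
  obtain Bs where Bs: "mset Bs = P" using ex_mset by blast
  have "image_mset (nth as) (mset_set {..<length as}) = sum_list Bs"
    using assms(2) Bs mset_as_image[of as] by (metis sum_mset_sum_list)
  from split_idx[OF _ this] obtain g where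
    g: "\<forall>a\<in>{..<length as}. g a < length Bs"
       "\<forall>j<length Bs. image_mset (nth as) (mset_set {a\<in>{..<length as}. g a = j}) = Bs!j" by auto
  have len: "length Bs = p" using Bs assms(1) by (metis size_mset)
  show ?thesis
  proof (intro exI[of _ g] conjI allI impI)
    fix i assume "i < length as" then show "g i < p" using g(1) len by auto
  next
    fix j assume j: "j < p"
    have "(\<Sum>i\<in>{i. i < length as \<and> g i = j}. as!i) = sum_mset (image_mset (nth as) (mset_set {a\<in>{..<length as}. g a = j}))"
      by (simp add: sum_unfold_sum_mset)
    also have "\<dots> = sum_mset (Bs!j)" using g(2) j len by simp
    also have "\<dots> = s" using assms(3) Bs j len by (metis nth_mem set_mset_mset)
    finally show "(\<Sum>i\<in>{i. i < length as \<and> g i = j}. as!i) = s" .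
  qed
qed

lemma sum_fibers:
  "finite Q \<Longrightarrow> finite A \<Longrightarrow> (\<forall>a\<in>A. f a \<in> Q) \<Longrightarrow>
   sum_mset (image_mset (\<lambda>q. image_mset h (mset_set {a\<in>A. f a = q})) (mset_set Q)) = image_mset h (mset_set A)"
proof (induction Q arbitrary: A rule: finite_induct)
  case empty
  then show ?case by simp
next
  case (insert q Q)
  define A' where "A' = {a\<in>A. f a \<noteq> q}"
  have A: "A = {a\<in>A. f a = q} \<union> A'" by (auto simp: A'_def)
  have "image_mset (\<lambda>q'. image_mset h (mset_set {a\<in>A. f a = q'})) (mset_set Q)
      = image_mset (\<lambda>q'. image_mset h (mset_set {a\<in>A'. f a = q'})) (mset_set Q)"
  proof (rule image_mset_cong)
    fix q' assume "q' \<in># mset_set Q"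
    then have "q' \<noteq> q" using insert by auto
    then have "{a\<in>A. f a = q'} = {a\<in>A'. f a = q'}" by (auto simp: A'_def)
    then show "image_mset h (mset_set {a\<in>A. f a = q'}) = image_mset h (mset_set {a\<in>A'. f a = q'})" by simp
  qed
  moreover have "sum_mset (image_mset (\<lambda>q'. image_mset h (mset_set {a\<in>A'. f a = q'})) (mset_set Q)) = image_mset h (mset_set A')"
    using insert by (intro insert.IH) (auto simp: A'_def)
  moreover have "mset_set A = mset_set {a\<in>A. f a = q} + mset_set A'"
    by (subst A, rule mset_set_Union) (use insert in \<open>auto simp: A'_def\<close>)
  ultimately show ?case using insert by simp
qed

lemma build_P:
  assumes fQ: "finite Q" and fQ2: "\<forall>i<length as. f i \<in> Q"
    and sums: "\<forall>q\<in>Q. (\<Sum>i\<in>{i. i < length as \<and> f i = q}. as!i) = s"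
    and len: "length as = 3 * p" and bnd: "\<forall>a\<in>set as. s < 4 * a \<and> 2 * a < s" and s: "s > 0"
  shows "\<exists>P :: nat multiset multiset. size P = p \<and> sum_mset P = mset as \<and>
              (\<forall>B\<in>#P. size B = 3 \<and> sum_mset B = s)"
proof -
  define I where "I q = {i. i < length as \<and> f i = q}" for q
  have finI: "finite (I q)" for q by (simp add: I_def)
  have card3: "card (I q) = 3" if q: "q \<in> Q" for q
  proof -
    have sq: "(\<Sum>i\<in>I q. as!i) = s" using sums q by (simp add: I_def)
    have ne: "I q \<noteq> {}" using sq s by auto
    have mem: "as!i \<in> set as" if "i \<in> I q" for i using that by (auto simp: I_def)
    have "(\<Sum>i\<in>I q. s) < (\<Sum>i\<in>I q. 4 * as!i)"
      by (rule sum_strict_mono) (use finI ne bnd mem in auto)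
    also have "\<dots> = 4 * s" using sq by (simp add: sum_distrib_left[symmetric])
    finally have a: "card (I q) * s < 4 * s" by simp
    have "(\<Sum>i\<in>I q. 2 * as!i) < (\<Sum>i\<in>I q. s)"
      by (rule sum_strict_mono) (use finI ne bnd mem in auto)
    moreover have "(\<Sum>i\<in>I q. 2 * as!i) = 2 * s" using sq by (simp add: sum_distrib_left[symmetric])
    ultimately have b: "2 * s < card (I q) * s" by simp
    from a have "card (I q) < 4" using s by simp
    moreover from b have "2 < card (I q)" using s by (metis mult_less_cancel2)
    ultimately show ?thesis by simp
  qed
  define P where "P = image_mset (\<lambda>q. image_mset (nth as) (mset_set (I q))) (mset_set Q)"
  have "card {..<length as} = (\<Sum>q\<in>Q. card (I q))"
  proof -
    have "{..<length as} = (\<Union>q\<in>Q. I q)" using fQ2 by (auto simp: I_def)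
    then show ?thesis using fQ finI by (simp add: card_UN_disjoint I_def) (subst card_UN_disjoint; auto)
  qed
  then have "3 * p = 3 * card Q" using len card3 by simp
  then have cQ: "card Q = p" by simp
  have "sum_mset P = image_mset (nth as) (mset_set {..<length as})"
  proof -
    have eq: "{i. i < length as \<and> f i = q} = {a\<in>{..<length as}. f a = q}" for q by auto
    show ?thesis unfolding P_def I_def eq by (rule sum_fibers) (use fQ fQ2 in auto)
  qed
  then have sP: "sum_mset P = mset as" by (simp add: mset_as_image[symmetric])
  show ?thesis
  proof (intro exI[of _ P] conjI ballI)
    show "size P = p" using cQ by (simp add: P_def)
    show "sum_mset P = mset as" by (rule sP)
  next
    fix B assume "B \<in># P"
    then obtain q where q: "q \<in> Q" "B = image_mset (nth as) (mset_set (I q))"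
      using fQ by (auto simp: P_def)
    show "size B = 3" using q card3 by simp
    show "sum_mset B = s" using q sums by (simp add: sum_unfold_sum_mset I_def)
  qed
qed

lemma leg_path:
  assumes "legE as i \<subseteq> F" "k \<le> as!i"
  shows "(None, vx i k) \<in> (adj_rel F)\<^sup>* \<and> (vx i k, None) \<in> (adj_rel F)\<^sup>*"
  using assms(2)
proof (induction k)
  case 0
  then show ?case by simp
next
  case (Suc k)
  have e: "{vx i k, vx i (Suc k)} \<in> F" using assms(1) Suc.prems unfolding legE_def by auto
  have ne: "vx i k \<noteq> vx i (Suc k)" by (simp add: vx_def)
  have r1: "(vx i k, vx i (Suc k)) \<in> adj_rel F" using e ne by (simp add: adj_rel_def)
  have r2: "(vx i (Suc k), vx i k) \<in> adj_rel F" using e ne by (simp add: adj_rel_def insert_commute)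
  from Suc have "(None, vx i k) \<in> (adj_rel F)\<^sup>* \<and> (vx i k, None) \<in> (adj_rel F)\<^sup>*" by simp
  then show ?case using r1 r2 by (meson converse_rtrancl_into_rtrancl rtrancl.rtrancl_into_rtrancl)
qed

lemma union_legs_tree:
  assumes F: "F = (\<Union>i\<in>I. legE as i)" and I: "I \<subseteq> {..<length as}" and ne: "F \<noteq> {}"
  shows "is_tree_edges F"
proof -
  have Fsub: "F \<subseteq> spider_E as" using F I by (auto simp: spider_E_eq)
  have "finite I" using I finite_subset by blast
  then have fin: "finite F" using F by simp
  have conn: "(None, u) \<in> (adj_rel F)\<^sup>* \<and> (u, None) \<in> (adj_rel F)\<^sup>*" if "u \<in> \<Union>F" for u
  proof -
    from that F obtain i e where ie: "i \<in> I" "e \<in> legE as i" "u \<in> e" by auto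
    then obtain k where k: "k < as!i" "e = {vx i k, vx i (Suc k)}" unfolding legE_def by auto
    have sub: "legE as i \<subseteq> F" using F ie by auto
    have a: "k \<le> as!i" "Suc k \<le> as!i" using k by auto
    from ie(3) k(2) have "u = vx i k \<or> u = vx i (Suc k)" by auto
    then show ?thesis by (elim disjE) (simp_all only: leg_path[OF sub a(1)] leg_path[OF sub a(2)])
  qed
  have cg: "connected_graph (\<Union>F) F"
    unfolding connected_graph_def is_edge_set_def
  proof (intro conjI ballI)
    fix e assume "e \<in> F"
    then show "e \<subseteq> \<Union>F" by auto
    show "card e = 2" using \<open>e \<in> F\<close> F legE_card2 by auto
  next
    fix u v assume "u \<in> \<Union>F" "v \<in> \<Union>F"
    then show "(u, v) \<in> (adj_rel F)\<^sup>*" using conn by (meson rtrancl_trans)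
  qed
  have acyc: "(x, y) \<notin> (adj_rel (F - {{x, y}}))\<^sup>*" if "{x, y} \<in> F" "x \<noteq> y" for x y
  proof
    assume "(x, y) \<in> (adj_rel (F - {{x, y}}))\<^sup>*"
    then have "(x, y) \<in> (adj_rel (spider_E as - {{x, y}}))\<^sup>*"
      by (rule rtrancl_adj_mono[rotated]) (use Fsub in auto)
    then show False using spider_acyclic[of x y as] that Fsub by auto
  qed
  show ?thesis unfolding is_tree_edges_def using ne fin cg acyc by blast
qed

lemma from_g_trees:
  assumes g: "\<forall>i<length as. g i < p"
    and sums: "\<forall>j<p. (\<Sum>i\<in>{i. i < length as \<and> g i = j}. as!i) = s" and s: "s > 0"
  shows "\<exists>F :: nat \<Rightarrow> (nat \<times> nat) option set set.
                 (\<Union>j<p. F j) = spider_E as \<and>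
                 (\<forall>j<p. \<forall>k<p. j \<noteq> k \<longrightarrow> F j \<inter> F k = {}) \<and>
                 (\<forall>j<p. F j \<subseteq> spider_E as \<and> is_tree_edges (F j) \<and> card (F j) = s)"
proof -
  define I where "I j = {i. i < length as \<and> g i = j}" for j
  define F where "F j = (\<Union>i\<in>I j. legE as i)" for j
  have cardF: "card (F j) = s" if "j < p" for j
  proof -
    have "card (F j) = (\<Sum>i\<in>I j. card (legE as i))"
      unfolding F_def by (rule card_UN_disjoint) (auto simp: I_def legE_disj)
    also have "\<dots> = s" using sums that by (simp add: card_legE I_def)
    finally show ?thesis .
  qed
  show ?thesis
  proof (intro exI[of _ F] conjI allI impI)
    show "(\<Union>j<p. F j) = spider_E as"
      unfolding spider_E_eq F_def I_def using g by auto
  next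
    fix j k assume "j < p" "k < p" "j \<noteq> k"
    show "F j \<inter> F k = {}"
    proof (rule ccontr)
      assume "F j \<inter> F k \<noteq> {}"
      then obtain e i i' where "e \<in> legE as i" "e \<in> legE as i'" "g i = j" "g i' = k"
        unfolding F_def I_def by blast
      then show False using legE_disj[of i i' as] \<open>j \<noteq> k\<close> by (cases "i = i'") auto
    qed
  next
    fix j assume j: "j < p"
    show "F j \<subseteq> spider_E as" unfolding F_def I_def spider_E_eq by auto
    show "card (F j) = s" using cardF j .
    show "is_tree_edges (F j)"
    proof (rule union_legs_tree[OF F_def])
      show "I j \<subseteq> {..<length as}" by (auto simp: I_def)
      show "F j \<noteq> {}" using cardF[OF j] s by auto
    qed
  qed
qed

definition Pairs :: "'a set \<Rightarrow> 'a set set" where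
  "Pairs K = {e. e \<subseteq> K \<and> card e = 2}"

lemma card_Pairs: "finite K \<Longrightarrow> card (Pairs K) = card K choose 2"
  unfolding Pairs_def by (rule n_subsets)

lemma finite_Pairs: "finite K \<Longrightarrow> finite (Pairs K)"
  unfolding Pairs_def by (rule finite_subset[of _ "Pow K"]) auto

lemma choose2_arith: "(Suc s choose 2) - s = s * (s - 1) div 2"
proof -
  have "(Suc s choose 2) = (s choose 1) + (s choose 2)"
    by (metis Suc_1 binomial_Suc_Suc)
  then show ?thesis by (simp add: choose_two)
qed

lemma even_s: "even (s * (s - 1 :: nat))"
  by (cases s) auto

lemma from_g_completion:
  assumes g: "\<forall>i<length as. g i < p"
    and sums: "\<forall>j<p. (\<Sum>i\<in>{i. i < length as \<and> g i = j}. as!i) = s" and s: "s > 0"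
  shows "\<exists>E'. is_completion_set (s + 1) (spider_V as) (spider_E as) E' \<and>
                    finite E' \<and> card E' = p * s * (s - 1) div 2"
proof -
  define V where "V = spider_V as"
  define E where "E = spider_E as"
  define I where "I j = {i. i < length as \<and> g i = j}" for j
  define KV where "KV j = insert None (\<Union>i\<in>I j. legV as i)" for j
  define E' where "E' = (\<Union>j<p. Pairs (KV j)) - E"
  have finI: "finite (I j)" for j by (simp add: I_def)
  have finKV: "finite (KV j)" for j using finI by (simp add: KV_def)
  have KVV: "KV j \<subseteq> V" for j unfolding KV_def V_def spider_V_eq I_def by auto
  have cardKV: "card (KV j) = Suc s" if "j < p" for j
  proof -
    have "card (\<Union>i\<in>I j. legV as i) = (\<Sum>i\<in>I j. card (legV as i))"
      by (rule card_UN_disjoint) (auto simp: finI legV_disj)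
    also have "\<dots> = s" using sums that by (simp add: card_legV I_def)
    finally show ?thesis unfolding KV_def using finI by (subst card_insert_disjoint) auto
  qed
  have inter: "Pairs (KV j) \<inter> E = (\<Union>i\<in>I j. legE as i)" for j
  proof
    show "Pairs (KV j) \<inter> E \<subseteq> (\<Union>i\<in>I j. legE as i)"
    proof
      fix e assume e: "e \<in> Pairs (KV j) \<inter> E"
      then have "e \<in> spider_E as" by (simp add: E_def)
      then obtain i' k where ik: "i' < length as" "k < as!i'" "e = {vx i' k, vx i' (Suc k)}"
        by (rule spider_edge_cases)
      have "Some (i', Suc k) \<in> KV j" using e ik by (auto simp: Pairs_def)
      then obtain i where "i \<in> I j" "Some (i', Suc k) \<in> legV as i" unfolding KV_def by auto
      then have "i' \<in> I j" by (auto simp: legV_def)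
      then show "e \<in> (\<Union>i\<in>I j. legE as i)" using ik unfolding legE_def by auto
    qed
    show "(\<Union>i\<in>I j. legE as i) \<subseteq> Pairs (KV j) \<inter> E"
    proof
      fix e assume "e \<in> (\<Union>i\<in>I j. legE as i)"
      then obtain i where i: "i \<in> I j" "e \<in> legE as i" by auto
      have "e \<subseteq> KV j" using legE_sub[OF i(2)] i(1) unfolding KV_def by auto
      moreover have "card e = 2" using legE_card2[OF i(2)] .
      moreover have "e \<in> E" using i unfolding E_def spider_E_eq I_def by auto
      ultimately show "e \<in> Pairs (KV j) \<inter> E" by (simp add: Pairs_def)
    qed
  qed
  have card_inter: "card (Pairs (KV j) \<inter> E) = s" if "j < p" for j
  proof -
    have "card (\<Union>i\<in>I j. legE as i) = (\<Sum>i\<in>I j. card (legE as i))"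
      by (rule card_UN_disjoint) (auto simp: finI legE_disj)
    also have "\<dots> = s" using sums that by (simp add: card_legE I_def)
    finally show ?thesis using inter by simp
  qed
  have cardj: "card (Pairs (KV j) - E) = s * (s - 1) div 2" if "j < p" for j
  proof -
    have "card (Pairs (KV j) - E) = card (Pairs (KV j)) - card (Pairs (KV j) \<inter> E)"
      by (rule card_Diff_subset_Int) (simp add: finite_Pairs finKV)
    also have "\<dots> = (Suc s choose 2) - s" using card_inter[OF that] cardKV[OF that] finKV
      by (simp add: card_Pairs)
    finally show ?thesis using choose2_arith by simp
  qed
  have KVdisj: "KV j \<inter> KV k \<subseteq> {None}" if "j \<noteq> k" for j k
  proof
    fix x assume x: "x \<in> KV j \<inter> KV k"
    show "x \<in> {None}"
    proof (rule ccontr)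
      assume "x \<notin> {None}"
      then obtain i i' where "i \<in> I j" "i' \<in> I k" "x \<in> legV as i" "x \<in> legV as i'"
        using x unfolding KV_def by auto
      moreover then have "i \<noteq> i'" using that by (auto simp: I_def)
      ultimately show False using legV_disj[of i i' as] by auto
    qed
  qed
  have Pdisj: "(Pairs (KV j) - E) \<inter> (Pairs (KV k) - E) = {}" if "j \<noteq> k" for j k
  proof (rule ccontr)
    assume "(Pairs (KV j) - E) \<inter> (Pairs (KV k) - E) \<noteq> {}"
    then obtain e where "e \<subseteq> KV j" "e \<subseteq> KV k" "card e = 2" by (auto simp: Pairs_def)
    then have "e \<subseteq> {None}" using KVdisj[OF that] by blast
    then have "card e \<le> card {None}" using card_mono[of "{None}" e] by simp
    then have "card e \<le> 1" by simp
    then show False using \<open>card e = 2\<close> by simp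
  qed
  have E'eq: "E' = (\<Union>j<p. Pairs (KV j) - E)" unfolding E'_def by auto
  have finE': "finite E'" unfolding E'_def by (simp add: finite_Pairs finKV)
  have cardE': "card E' = p * s * (s - 1) div 2"
  proof -
    have "card E' = (\<Sum>j<p. card (Pairs (KV j) - E))"
      unfolding E'eq by (rule card_UN_disjoint) (auto simp: finite_Pairs finKV Pdisj)
    also have "\<dots> = p * (s * (s - 1) div 2)" using cardj by simp
    also have "\<dots> = p * s * (s - 1) div 2"
      using div_mult_swap[of 2 "s * (s - 1)" p] even_s[of s] by (simp add: mult.assoc)
    finally show ?thesis .
  qed
  have Esub: "E \<subseteq> (\<Union>j<p. Pairs (KV j))"
  proof
    fix e assume "e \<in> E"
    then obtain i where i: "i < length as" "e \<in> legE as i" unfolding E_def spider_E_eq by auto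
    have "e \<in> Pairs (KV (g i)) \<inter> E" using inter[of "g i"] i by (auto simp: I_def)
    then show "e \<in> (\<Union>j<p. Pairs (KV j))" using g i by auto
  qed
  have EG: "E \<union> E' = (\<Union>j<p. Pairs (KV j))" unfolding E'_def using Esub by auto
  have allNone: "v \<noteq> None \<Longrightarrow> v \<in> V \<Longrightarrow> {None, v} \<in> E \<union> E'" for v
  proof -
    assume v: "v \<noteq> None" "v \<in> V"
    then obtain i where i: "i < length as" "v \<in> legV as i" unfolding V_def spider_V_eq by auto
    then have "v \<in> KV (g i)" by (auto simp: KV_def I_def)
    moreover have "None \<in> KV (g i)" by (simp add: KV_def)
    ultimately have "{None, v} \<in> Pairs (KV (g i))" using v by (auto simp: Pairs_def)
    then show ?thesis using EG g i by auto
  qed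
  have NoneV: "None \<in> V" by (simp add: V_def spider_V_eq)
  have reach: "(None, v) \<in> (adj_rel (E \<union> E'))\<^sup>* \<and> (v, None) \<in> (adj_rel (E \<union> E'))\<^sup>*" if "v \<in> V" for v
  proof (cases "v = None")
    case True then show ?thesis by simp
  next
    case False
    then have "(None, v) \<in> adj_rel (E \<union> E')" "(v, None) \<in> adj_rel (E \<union> E')"
      using allNone[OF False that] by (auto simp: adj_rel_def insert_commute)
    then show ?thesis by auto
  qed
  have cover: "has_k1_cover (s + 1) V (E \<union> E')"
    unfolding has_k1_cover_def connected_graph_def is_edge_set_def
  proof (intro conjI ballI)
    fix e assume "e \<in> E \<union> E'"
    then obtain j where j: "j < p" "e \<in> Pairs (KV j)" using EG by auto
    then show "e \<subseteq> V" "card e = 2" using KVV by (auto simp: Pairs_def)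
    show "\<exists>C. C \<subseteq> V \<and> finite C \<and> card C = s + 1 \<and> e \<subseteq> C \<and> is_clique (E \<union> E') C"
    proof (intro exI[of _ "KV j"] conjI)
      show "KV j \<subseteq> V" "finite (KV j)" "card (KV j) = s + 1" using KVV finKV cardKV[OF j(1)] by auto
      show "e \<subseteq> KV j" using j by (simp add: Pairs_def)
      show "is_clique (E \<union> E') (KV j)" unfolding is_clique_def
      proof (intro ballI impI)
        fix x y assume "x \<in> KV j" "y \<in> KV j" "x \<noteq> y"
        then have "{x, y} \<in> Pairs (KV j)" by (simp add: Pairs_def)
        then show "{x, y} \<in> E \<union> E'" using EG j(1) by auto
      qed
    qed
  next
    fix u v assume "u \<in> V" "v \<in> V"
    then show "(u, v) \<in> (adj_rel (E \<union> E'))\<^sup>*" using reach by (meson rtrancl_trans)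
  qed
  have nonE: "E' \<subseteq> non_edges V E"
  proof
    fix e assume e: "e \<in> E'"
    then obtain j where j: "j < p" "e \<in> Pairs (KV j)" "e \<notin> E" unfolding E'_def by auto
    then obtain x y where "e = {x, y}" "x \<noteq> y" by (auto simp: Pairs_def card_2_iff)
    then show "e \<in> non_edges V E" using j KVV unfolding non_edges_def Pairs_def by blast
  qed
  show ?thesis
    using nonE cover finE' cardE' unfolding is_completion_set_def V_def E_def by blast
qed

lemma from_trees:
  assumes Fu: "(\<Union>j<p. F j) = spider_E as"
    and Fd: "\<forall>j<p. \<forall>k<p. j \<noteq> k \<longrightarrow> F j \<inter> F k = {}"
    and Ft: "\<forall>j<p. F j \<subseteq> spider_E as \<and> is_tree_edges (F j) \<and> card (F j) = s"
    and bnd: "\<forall>a\<in>set as. s < 4 * a \<and> 2 * a < s"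
  shows "\<exists>f. (\<forall>i<length as. f i < p) \<and>
             (\<forall>j<p. (\<Sum>i\<in>{i. i < length as \<and> f i = j}. as!i) = s)"
proof -
  have alt: "as!i < s" "1 \<le> as!i" if "i < length as" for i
    using bnd that nth_mem[OF that] by fastforce+
  have conn: "(u, v) \<in> (adj_rel (F j))\<^sup>*" if "j < p" "u \<in> \<Union>(F j)" "v \<in> \<Union>(F j)" for j u v
    using Ft that unfolding is_tree_edges_def connected_graph_def by blast
  have None_in: "None \<in> \<Union>(F j)" if j: "j < p" for j
  proof (rule ccontr)
    assume nN: "None \<notin> \<Union>(F j)"
    have "F j \<noteq> {}" using Ft j unfolding is_tree_edges_def by blast
    then obtain e where e: "e \<in> F j" by blast
    then have "e \<in> spider_E as" using Ft j by blast
    then obtain i k where ik: "i < length as" "k < as!i" "e = {vx i k, vx i (Suc k)}"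
      by (rule spider_edge_cases)
    have w: "Some (i, Suc k) \<in> \<Union>(F j)" using e ik by auto
    have wl: "Some (i, Suc k) \<in> legV as i" using ik by (auto simp: legV_def)
    have sub: "\<Union>(F j) \<subseteq> legV as i"
    proof
      fix u assume u: "u \<in> \<Union>(F j)"
      show "u \<in> legV as i"
      proof (rule ccontr)
        assume "u \<notin> legV as i"
        then obtain a b where ab: "{a, b} \<in> F j" "a \<in> legV as i" "b \<notin> legV as i"
          using crossing[OF conn[OF j w u]] wl by blast
        then have "b = None" using leg_boundary[of a b as i] Ft j by blast
        then show False using ab nN by blast
      qed
    qed
    have "F j \<subseteq> legE as i"
    proof
      fix e' assume e': "e' \<in> F j"
      then have "e' \<in> spider_E as" using Ft j by blast
      then obtain i' where i': "i' < length as" "e' \<in> legE as i'" unfolding spider_E_eq by blast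
      have "e' \<subseteq> insert None (legV as i)" using e' sub by blast
      then have "i' = i" using legE_in_leg[OF i'(2)] by blast
      then show "e' \<in> legE as i" using i' by simp
    qed
    then have "card (F j) \<le> card (legE as i)" by (intro card_mono) auto
    then have "s \<le> as!i" using Ft j card_legE[of as i] by simp
    then show False using alt(1)[OF ik(1)] by simp
  qed
  define fe :: "nat \<Rightarrow> (nat \<times> nat) option set" where "fe i = {None, Some (i, 1)}" for i
  have fe_E: "fe i \<in> spider_E as" if "i < length as" for i
    using alt(2)[OF that] that unfolding fe_def spider_E_def by blast
  have exj: "\<exists>j<p. fe i \<in> F j" if "i < length as" for i
    using fe_E[OF that] Fu by blast
  define f where "f i = (SOME j. j < p \<and> fe i \<in> F j)" for i
  have f: "f i < p \<and> fe i \<in> F (f i)" if "i < length as" for i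
    unfolding f_def using someI_ex[OF exj[OF that]] by blast
  have legF: "legE as i \<subseteq> F (f i)" if i: "i < length as" for i
  proof
    fix e assume e: "e \<in> legE as i"
    then have "e \<in> spider_E as" using i unfolding spider_E_eq by blast
    then obtain j' where j': "j' < p" "e \<in> F j'" using Fu by blast
    obtain k where k: "k < as!i" "e = {vx i k, vx i (Suc k)}" using e unfolding legE_def by auto
    have w: "Some (i, Suc k) \<in> \<Union>(F j')" using j' k by auto
    have wl: "Some (i, Suc k) \<in> legV as i" using k by (auto simp: legV_def)
    obtain a b where ab: "{a, b} \<in> F j'" "a \<in> legV as i" "b \<notin> legV as i"
      using crossing[OF conn[OF j'(1) w None_in[OF j'(1)]], of "legV as i"] wl by auto
    then have "b = None \<and> a = Some (i, 1)" using leg_boundary[of a b as i] Ft j'(1) by blast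
    then have "fe i \<in> F j'" using ab by (simp add: fe_def insert_commute)
    then have "j' = f i" using f[OF i] Fd j'(1) by blast
    then show "e \<in> F (f i)" using j' by simp
  qed
  have Feq: "F j = (\<Union>i\<in>{i. i < length as \<and> f i = j}. legE as i)" if j: "j < p" for j
  proof
    show "F j \<subseteq> (\<Union>i\<in>{i. i < length as \<and> f i = j}. legE as i)"
    proof
      fix e assume e: "e \<in> F j"
      then have "e \<in> spider_E as" using Ft j by blast
      then obtain i where i: "i < length as" "e \<in> legE as i" unfolding spider_E_eq by blast
      then have "e \<in> F (f i)" using legF by blast
      then have "f i = j" using e Fd j f[OF i(1)] by blast
      then show "e \<in> (\<Union>i\<in>{i. i < length as \<and> f i = j}. legE as i)" using i by blast
    qed
    show "(\<Union>i\<in>{i. i < length as \<and> f i = j}. legE as i) \<subseteq> F j" using legF by blast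
  qed
  show ?thesis
  proof (intro exI[of _ f] conjI allI impI)
    fix i assume "i < length as" then show "f i < p" using f by blast
  next
    fix j assume j: "j < p"
    have "s = card (F j)" using Ft j by simp
    also have "\<dots> = (\<Sum>i\<in>{i. i < length as \<and> f i = j}. card (legE as i))"
      unfolding Feq[OF j] by (rule card_UN_disjoint) (auto simp: legE_disj)
    finally show "(\<Sum>i\<in>{i. i < length as \<and> f i = j}. as!i) = s" by (simp add: card_legE)
  qed
qed

locale compl =
  fixes as :: "nat list" and s p :: nat and E' :: "(nat \<times> nat) option set set"
  assumes len: "length as = 3 * p"
    and bnd: "\<forall>a\<in>set as. s < 4 * a \<and> 2 * a < s"
    and sumas: "sum_list as = s * p"
    and spos: "s > 0"
    and compl: "is_completion_set (s + 1) (spider_V as) (spider_E as) E'"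
    and finE': "finite E'"
    and cardE': "card E' = p * s * (s - 1) div 2"
begin

definition "EG = spider_E as \<union> E'"
definition "R = adj_rel EG"
definition "d v = (LEAST k. (None, v) \<in> R ^^ k)"
definition "wt e v = (if \<exists>u\<in>e. d u < d v then 2 else if \<exists>u\<in>e. d v < d u then 0 else (1::nat))"
definition "W v = (\<Sum>e\<in>{e\<in>EG. v \<in> e}. wt e v)"
definition "K v = insert v {x. {x, v} \<in> EG \<and> d x \<le> d v}"

lemma cover: "has_k1_cover (s + 1) (spider_V as) EG"
  using compl by (simp add: is_completion_set_def EG_def)

lemma edge_set: "is_edge_set (spider_V as) EG"
  using cover by (simp add: has_k1_cover_def connected_graph_def)

lemma conn: "u \<in> spider_V as \<Longrightarrow> v \<in> spider_V as \<Longrightarrow> (u, v) \<in> R\<^sup>*"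
  using cover by (simp add: has_k1_cover_def connected_graph_def R_def)

lemma clq: "e \<in> EG \<Longrightarrow> \<exists>C. C \<subseteq> spider_V as \<and> finite C \<and> card C = s + 1 \<and> e \<subseteq> C \<and> is_clique EG C"
  using cover by (simp add: has_k1_cover_def)

lemma E_EG: "spider_E as \<subseteq> EG" by (simp add: EG_def)

lemma disjEE': "spider_E as \<inter> E' = {}"
  using compl by (auto simp: is_completion_set_def non_edges_def)

lemma finEG: "finite EG" using finE' by (simp add: EG_def)

lemma cardEG: "2 * card EG = p * s * (s + 1)"
proof -
  have "card EG = s * p + p * s * (s - 1) div 2"
    unfolding EG_def using disjEE' finE' by (simp add: card_Un_disjoint card_spider_E sumas cardE')
  moreover have "even (p * s * (s - 1))" by (cases s) auto
  ultimately have "2 * card EG = 2 * s * p + p * s * (s - 1)" by simp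
  also have "\<dots> = p * s * (s + 1)" using spos by (cases s) (simp_all add: algebra_simps)
  finally show ?thesis .
qed

lemma cardV: "card (spider_V as) = s * p + 1"
  by (simp add: card_spider_V sumas)

lemma EG_pair: "e \<in> EG \<Longrightarrow> \<exists>x y. e = {x, y} \<and> x \<noteq> y \<and> x \<in> spider_V as \<and> y \<in> spider_V as"
  using edge_set unfolding is_edge_set_def by (metis card_2_iff insert_subset)

lemma EG_sub: "e \<in> EG \<Longrightarrow> e \<subseteq> spider_V as"
  using edge_set unfolding is_edge_set_def by blast

lemma EG_ne: "{x, y} \<in> EG \<Longrightarrow> x \<noteq> y"
  using edge_set unfolding is_edge_set_def by fastforce

lemma R_iff: "(x, y) \<in> R \<longleftrightarrow> {x, y} \<in> EG \<and> x \<noteq> y"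
  by (simp add: R_def adj_rel_def)

lemma NoneV: "None \<in> spider_V as" by (simp add: spider_V_eq)

lemma reach: "v \<in> spider_V as \<Longrightarrow> (None, v) \<in> R ^^ d v"
proof -
  assume "v \<in> spider_V as"
  then have "(None, v) \<in> R\<^sup>*" using conn NoneV by blast
  then obtain k where "(None, v) \<in> R ^^ k" using rtrancl_power by blast
  then show ?thesis unfolding d_def by (rule LeastI)
qed

lemma d_le: "(None, v) \<in> R ^^ k \<Longrightarrow> d v \<le> k"
  unfolding d_def by (rule Least_le)

lemma d_adj: "{u, v} \<in> EG \<Longrightarrow> u \<in> spider_V as \<Longrightarrow> d v \<le> d u + 1"
proof -
  assume e: "{u, v} \<in> EG" and u: "u \<in> spider_V as"
  have "(u, v) \<in> R" using e EG_ne[OF e] by (simp add: R_iff)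
  then have "(None, v) \<in> R ^^ Suc (d u)" using reach[OF u] by (rule relpow_Suc_I[rotated])
  then show ?thesis using d_le by fastforce
qed

lemma d_None: "d None = 0"
  unfolding d_def by (rule Least_eq_0) simp

lemma d0: "v \<in> spider_V as \<Longrightarrow> d v = 0 \<Longrightarrow> v = None"
  using reach by fastforce

lemma parent: "v \<in> spider_V as \<Longrightarrow> v \<noteq> None \<Longrightarrow> \<exists>u. {u, v} \<in> EG \<and> u \<in> spider_V as \<and> d u + 1 = d v"
proof -
  assume v: "v \<in> spider_V as" "v \<noteq> None"
  then obtain k where k: "d v = Suc k" using d0 by (cases "d v") auto
  then have "(None, v) \<in> R ^^ Suc k" using reach[OF v(1)] by simp
  then obtain u where u: "(None, u) \<in> R ^^ k" "(u, v) \<in> R" by (rule relpow_Suc_E)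
  have e: "{u, v} \<in> EG" using u(2) by (simp add: R_iff)
  have uV: "u \<in> spider_V as" using EG_sub[OF e] by simp
  have "d u \<le> k" using d_le[OF u(1)] .
  moreover have "d v \<le> d u + 1" using d_adj[OF e uV] .
  ultimately show ?thesis using e uV k by (intro exI[of _ u]) simp
qed

lemma wt_pair: "x \<noteq> y \<Longrightarrow> wt {x, y} x + wt {x, y} y = 2"
  unfolding wt_def by auto

lemma W_sum: "(\<Sum>v\<in>spider_V as. W v) = 2 * card EG"
proof -
  have "(\<Sum>v\<in>spider_V as. W v) = (\<Sum>v\<in>spider_V as. \<Sum>e\<in>EG. if v \<in> e then wt e v else 0)"
    unfolding W_def by (intro sum.cong refl sum.inter_filter finEG)
  also have "\<dots> = (\<Sum>e\<in>EG. \<Sum>v\<in>spider_V as. if v \<in> e then wt e v else 0)"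
    by (rule sum.swap)
  also have "\<dots> = (\<Sum>e\<in>EG. \<Sum>v\<in>e. wt e v)"
  proof (rule sum.cong[OF refl])
    fix e assume e: "e \<in> EG"
    have "(\<Sum>v\<in>spider_V as. if v \<in> e then wt e v else 0) = (\<Sum>v\<in>{v \<in> spider_V as. v \<in> e}. wt e v)"
      by (rule sum.inter_filter[symmetric]) simp
    also have "{v \<in> spider_V as. v \<in> e} = e" using EG_sub[OF e] by blast
    finally show "(\<Sum>v\<in>spider_V as. if v \<in> e then wt e v else 0) = (\<Sum>v\<in>e. wt e v)" .
  qed
  also have "\<dots> = (\<Sum>e\<in>EG. 2)"
  proof (rule sum.cong[OF refl])
    fix e assume e: "e \<in> EG"
    then obtain x y where xy: "e = {x, y}" "x \<noteq> y" using EG_pair by blast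
    show "(\<Sum>v\<in>e. wt e v) = 2" using xy wt_pair[OF xy(2)] by simp
  qed
  finally show ?thesis by simp
qed

end

context compl begin

lemma finInc: "finite {e \<in> EG. v \<in> e}" using finEG by simp

lemma wt_le: "{x, v} \<in> EG \<Longrightarrow> d x \<le> d v \<Longrightarrow> wt {x, v} v = (if d x < d v then 2 else 1)"
  unfolding wt_def by auto

lemma W_analysis:
  assumes v: "v \<in> spider_V as" "v \<noteq> None"
  shows "s + 1 \<le> W v \<and>
         (W v \<le> s + 1 \<longrightarrow> K v \<subseteq> spider_V as \<and> finite (K v) \<and> card (K v) = s + 1 \<and>
              is_clique EG (K v) \<and> (\<exists>u. {x \<in> K v. d x < d v} = {u}))"
proof -
  obtain u where u: "{u, v} \<in> EG" "u \<in> spider_V as" "d u + 1 = d v" using parent[OF v] by blast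
  obtain C where C: "C \<subseteq> spider_V as" "finite C" "card C = s + 1" "{u, v} \<subseteq> C" "is_clique EG C"
    using clq[OF u(1)] by blast
  have uv: "u \<noteq> v" using EG_ne[OF u(1)] .
  have Cd: "{x, v} \<in> EG \<and> d x \<le> d v" if x: "x \<in> C - {v}" for x
  proof
    show "{x, v} \<in> EG" using C(4,5) x unfolding is_clique_def by auto
    show "d x \<le> d v"
    proof (cases "x = u")
      case True then show ?thesis using u by simp
    next
      case False
      then have "{u, x} \<in> EG" using C(4,5) x unfolding is_clique_def by auto
      then show ?thesis using d_adj[OF _ u(2)] u(3) by fastforce
    qed
  qed
  define Img where "Img = (\<lambda>x. {x, v}) ` (C - {v})"
  define L where "L = {x \<in> C - {v}. d x < d v}"
  have ImgInc: "Img \<subseteq> {e \<in> EG. v \<in> e}" using Cd unfolding Img_def by auto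
  have inj: "inj_on (\<lambda>x. {x, v}) (C - {v})" unfolding inj_on_def by (auto simp: doubleton_eq_iff)
  have finL: "finite L" using C(2) by (simp add: L_def)
  have uL: "u \<in> L" using u uv C(4) by (auto simp: L_def)
  have sumImg: "(\<Sum>e\<in>Img. wt e v) = s + card L"
  proof -
    have "(\<Sum>e\<in>Img. wt e v) = (\<Sum>x\<in>C - {v}. wt {x, v} v)"
      unfolding Img_def by (rule sum.reindex[OF inj, unfolded comp_def])
    also have "\<dots> = (\<Sum>x\<in>C - {v}. 1 + (if d x < d v then 1 else 0))"
      by (rule sum.cong[OF refl]) (use Cd wt_le in auto)
    also have "\<dots> = card (C - {v}) + (\<Sum>x\<in>C - {v}. if d x < d v then 1 else 0)"
      by (simp only: sum.distrib card_eq_sum)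
    also have "(\<Sum>x\<in>C - {v}. if d x < d v then 1 else 0) = card L"
      unfolding L_def using C(2) by (simp add: sum.inter_filter[symmetric])
    also have "card (C - {v}) = s" using C(2,3,4) by (simp add: card_Diff_singleton)
    finally show ?thesis .
  qed
  have Wsplit: "W v = (\<Sum>e\<in>{e \<in> EG. v \<in> e} - Img. wt e v) + (\<Sum>e\<in>Img. wt e v)"
    unfolding W_def by (rule sum.subset_diff[OF ImgInc finInc])
  have cL: "card L \<ge> 1" using uL finL by (metis One_nat_def Suc_leI card_gt_0_iff empty_iff)
  show ?thesis
  proof (rule conjI[OF _ impI])
    show "s + 1 \<le> W v" using Wsplit sumImg cL by simp
  next
    assume le: "W v \<le> s + 1"
    have cL1: "card L = 1" and rest0: "(\<Sum>e\<in>{e \<in> EG. v \<in> e} - Img. wt e v) = 0"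
      using Wsplit sumImg cL le by simp_all
    have rest: "wt e v = 0" if "e \<in> {e \<in> EG. v \<in> e} - Img" for e
      using rest0 that finInc by (simp add: sum_eq_0_iff)
    have Leq: "L = {u}" using cL1 uL by (metis card_1_singletonE singletonD)
    have KC: "K v = C"
    proof
      show "C \<subseteq> K v"
      proof
        fix x assume "x \<in> C"
        then show "x \<in> K v" using Cd[of x] by (cases "x = v") (auto simp: K_def)
      qed
      show "K v \<subseteq> C"
      proof
        fix x assume x: "x \<in> K v"
        show "x \<in> C"
        proof (rule ccontr)
          assume xC: "x \<notin> C"
          then have xv: "x \<noteq> v" using C(4) by auto
          then have e: "{x, v} \<in> EG" "d x \<le> d v" using x by (auto simp: K_def)
          have "{x, v} \<notin> Img"
          proof
            assume "{x, v} \<in> Img"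
            then obtain y where "y \<in> C - {v}" "{x, v} = {y, v}" unfolding Img_def by auto
            then show False using xC xv by (auto simp: doubleton_eq_iff)
          qed
          then have "wt {x, v} v = 0" using rest e by auto
          then show False using wt_le[OF e] by (simp split: if_splits)
        qed
      qed
    qed
    have "{x \<in> K v. d x < d v} = L" unfolding KC L_def by auto
    then show "K v \<subseteq> spider_V as \<and> finite (K v) \<and> card (K v) = s + 1 \<and>
              is_clique EG (K v) \<and> (\<exists>u. {x \<in> K v. d x < d v} = {u})"
      using KC C Leq by auto
  qed
qed

lemma W_all:
  assumes v: "v \<in> spider_V as" "v \<noteq> None"
  shows "W v = s + 1"
proof (rule ccontr)
  assume ne: "W v \<noteq> s + 1"
  let ?V' = "spider_V as - {None}"
  have ge: "\<forall>x\<in>?V'. s + 1 \<le> W x" using W_analysis by blast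
  have "(\<Sum>x\<in>?V'. s + 1) < (\<Sum>x\<in>?V'. W x)"
  proof (rule sum_strict_mono_ex1)
    show "finite ?V'" by simp
    show "\<forall>x\<in>?V'. s + 1 \<le> W x" using ge .
    show "\<exists>a\<in>?V'. s + 1 < W a" using v ne ge by force
  qed
  also have "\<dots> \<le> (\<Sum>x\<in>spider_V as. W x)"
    by (rule sum_mono2) auto
  also have "\<dots> = p * s * (s + 1)" using W_sum cardEG by simp
  finally have "card ?V' * (s + 1) < p * s * (s + 1)" by simp
  moreover have "card ?V' = s * p" using cardV NoneV by (simp add: card_Diff_singleton)
  ultimately show False by (simp add: algebra_simps)
qed

lemma Kfacts:
  assumes v: "v \<in> spider_V as" "v \<noteq> None"
  shows "K v \<subseteq> spider_V as" "finite (K v)" "card (K v) = s + 1" "is_clique EG (K v)"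
    "\<exists>u. {x \<in> K v. d x < d v} = {u}"
  using W_analysis[OF v] W_all[OF v] by auto

lemma K_mem: "v \<in> K v" by (simp add: K_def)

lemma K_le: "x \<in> K v \<Longrightarrow> d x \<le> d v" by (auto simp: K_def)

lemma dpos: "v \<in> spider_V as \<Longrightarrow> v \<noteq> None \<Longrightarrow> d v \<noteq> 0" using d0 by blast

lemma K_eq:
  assumes v: "v \<in> spider_V as" "v \<noteq> None" and x: "x \<in> K v" "d x = d v"
  shows "K x = K v"
proof -
  have xV: "x \<in> spider_V as" using Kfacts(1)[OF v] x(1) by blast
  have xN: "x \<noteq> None"
  proof
    assume "x = None" then show False using x(2) dpos[OF v] d_None by simp
  qed
  have "K v \<subseteq> K x"
  proof
    fix y assume y: "y \<in> K v"
    show "y \<in> K x"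
    proof (cases "y = x")
      case True then show ?thesis by (simp add: K_mem)
    next
      case False
      then have "{y, x} \<in> EG" using Kfacts(4)[OF v] y x(1) unfolding is_clique_def by blast
      moreover have "d y \<le> d x" using K_le[OF y] x(2) by simp
      ultimately show ?thesis by (simp add: K_def)
    qed
  qed
  moreover have "card (K v) = card (K x)" using Kfacts(3)[OF v] Kfacts(3)[OF xV xN] by simp
  ultimately show ?thesis using Kfacts(2)[OF xV xN] by (metis card_subset_eq)
qed

end

lemma card_fibers: "finite A \<Longrightarrow> card A = (\<Sum>y\<in>f ` A. card {x\<in>A. f x = y})"
proof -
  assume fin: "finite A"
  have "A = (\<Union>y\<in>f ` A. {x\<in>A. f x = y})" by auto
  then have "card A = card (\<Union>y\<in>f ` A. {x\<in>A. f x = y})" by simp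
  also have "\<dots> = (\<Sum>y\<in>f ` A. card {x\<in>A. f x = y})"
    by (rule card_UN_disjoint) (use fin in auto)
  finally show ?thesis .
qed

context compl begin

lemma Vcases: "x \<in> spider_V as \<Longrightarrow> x \<noteq> None \<Longrightarrow> \<exists>i k. i < length as \<and> 1 \<le> k \<and> k \<le> as!i \<and> x = Some (i, k)"
  unfolding spider_V_def by auto

lemma a_lt: "i < length as \<Longrightarrow> as!i < s"
  using bnd nth_mem by fastforce

lemma Bl_card:
  assumes v: "v \<in> spider_V as" "v \<noteq> None"
  shows "card {x \<in> K v. d x = d v} = s"
proof -
  obtain u where u: "{x \<in> K v. d x < d v} = {u}" using Kfacts(5)[OF v] by blast
  have "{x \<in> K v. d x = d v} = K v - {x \<in> K v. d x < d v}" using K_le by force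
  also have "\<dots> = K v - {u}" using u by simp
  finally have eq: "{x \<in> K v. d x = d v} = K v - {u}" .
  have "u \<in> K v" using u by blast
  then show ?thesis unfolding eq using Kfacts(2,3)[OF v] by (simp add: card_Diff_singleton)
qed

lemma fiber:
  assumes v: "v \<in> spider_V as" "v \<noteq> None"
  shows "{x \<in> spider_V as - {None}. K x = K v} = {x \<in> K v. d x = d v}"
proof
  show "{x \<in> spider_V as - {None}. K x = K v} \<subseteq> {x \<in> K v. d x = d v}"
  proof
    fix x assume x: "x \<in> {x \<in> spider_V as - {None}. K x = K v}"
    then have "x \<in> K v" using K_mem[of x] by auto
    moreover have "v \<in> K x" using x K_mem[of v] by auto
    ultimately show "x \<in> {x \<in> K v. d x = d v}" using K_le by (auto intro: antisym)
  qed
  show "{x \<in> K v. d x = d v} \<subseteq> {x \<in> spider_V as - {None}. K x = K v}"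
  proof
    fix x assume x: "x \<in> {x \<in> K v. d x = d v}"
    have xV: "x \<in> spider_V as" using x Kfacts(1)[OF v] by blast
    have xN: "x \<noteq> None"
    proof
      assume "x = None" then show False using x dpos[OF v] d_None by simp
    qed
    show "x \<in> {x \<in> spider_V as - {None}. K x = K v}" using xV xN K_eq[OF v] x by auto
  qed
qed

definition "KK = K ` (spider_V as - {None})"

lemma finKK: "finite KK" by (simp add: KK_def)

lemma cardKK: "card KK = p"
proof -
  have "card (spider_V as - {None}) = (\<Sum>k\<in>KK. card {x \<in> spider_V as - {None}. K x = k})"
    unfolding KK_def by (rule card_fibers) simp
  also have "\<dots> = (\<Sum>k\<in>KK. s)"
  proof (rule sum.cong[OF refl])
    fix k assume "k \<in> KK"
    then obtain v where v: "v \<in> spider_V as" "v \<noteq> None" "k = K v" unfolding KK_def by blast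
    show "card {x \<in> spider_V as - {None}. K x = k} = s" using fiber[OF v(1,2)] Bl_card[OF v(1,2)] v(3) by simp
  qed
  finally have h1: "card (spider_V as - {None}) = s * card KK" by simp
  have h2: "card (spider_V as - {None}) = s * p" using cardV NoneV by (simp add: card_Diff_singleton)
  show ?thesis using h1 h2 spos by (metis mult_left_cancel not_gr0)
qed

end

context compl begin
lemma Ecover: "spider_E as \<subseteq> (\<Union>k\<in>KK. {e \<in> spider_E as. e \<subseteq> k})"
proof
  fix e assume e: "e \<in> spider_E as"
  then have eG: "e \<in> EG" using E_EG by blast
  obtain x y where xy: "e = {x, y}" "x \<noteq> y" "x \<in> spider_V as" "y \<in> spider_V as" using EG_pair[OF eG] by blast
  have main: "\<exists>k\<in>KK. {a, b} \<subseteq> k" if ab: "{a, b} \<in> EG" "a \<noteq> b" "b \<in> spider_V as" "d a \<le> d b" for a b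
  proof -
    have bN: "b \<noteq> None"
    proof
      assume "b = None"
      then have "d a = 0" using ab(4) d_None by simp
      then have "a = None" using d0 EG_sub[OF ab(1)] by blast
      then show False using \<open>b = None\<close> ab(2) by simp
    qed
    have "a \<in> K b" using ab by (simp add: K_def)
    then show ?thesis using K_mem[of b] ab(3) bN by (auto simp: KK_def)
  qed
  show "e \<in> (\<Union>k\<in>KK. {e \<in> spider_E as. e \<subseteq> k})"
  proof (cases "d x \<le> d y")
    case True
    then show ?thesis using main[of x y] xy e eG by auto
  next
    case False
    then have "{y, x} \<in> EG" "d y \<le> d x" using eG xy by (auto simp: insert_commute)
    then show ?thesis using main[of y x] xy e by (auto simp: insert_commute)
  qed
qed

lemma t_le:
  assumes k: "k \<in> KK"
  shows "card {e \<in> spider_E as. e \<subseteq> k} \<le> s" "None \<notin> k \<Longrightarrow> card {e \<in> spider_E as. e \<subseteq> k} < s"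
proof -
  obtain v where v: "v \<in> spider_V as" "v \<noteq> None" "k = K v" using k unfolding KK_def by blast
  have fk: "finite k" "card k = s + 1" "k \<subseteq> spider_V as" using Kfacts[OF v(1,2)] v(3) by auto
  show "card {e \<in> spider_E as. e \<subseteq> k} \<le> s"
  proof (cases "None \<in> k")
    case True
    then show ?thesis using count_with_None[OF fk(1) True, of as] fk(2) by simp
  next
    case False
    have "v \<in> k" using v K_mem by simp
    then obtain i1 k1 where i1: "i1 < length as" "1 \<le> k1" "k1 \<le> as!i1" "v = Some (i1, k1)"
      using Vcases[OF v(1,2)] by blast
    have "\<exists>y\<in>k. y \<notin> legV as i1"
    proof (rule ccontr)
      assume "\<not> (\<exists>y\<in>k. y \<notin> legV as i1)"
      then have "k \<subseteq> legV as i1" by blast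
      then have "card k \<le> as!i1" using card_mono[of "legV as i1" k] card_legV[of as i1] by simp
      then show False using fk(2) a_lt[OF i1(1)] by simp
    qed
    then obtain y where y: "y \<in> k" "y \<notin> legV as i1" by blast
    have yN: "y \<noteq> None" using y(1) \<open>None \<notin> k\<close> by metis
    obtain i2 k2 where i2: "i2 < length as" "1 \<le> k2" "k2 \<le> as!i2" "y = Some (i2, k2)"
      using Vcases[OF _ yN] y fk(3) by blast
    have "i1 \<noteq> i2" using y i2 by (auto simp: legV_def)
    then have "card {e \<in> spider_E as. e \<subseteq> k} + 2 \<le> card k"
      using count_two_legs[OF fk(1) False, of i1 k1 i2 k2 as] \<open>v \<in> k\<close> i1(4) y(1) i2(4) by simp
    then show ?thesis using fk(2) by simp
  qed
  assume nN: "None \<notin> k"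
  have "v \<in> k" using v K_mem by simp
  then obtain i1 k1 where i1: "i1 < length as" "1 \<le> k1" "k1 \<le> as!i1" "v = Some (i1, k1)"
    using Vcases[OF v(1,2)] by blast
  have "\<exists>y\<in>k. y \<notin> legV as i1"
  proof (rule ccontr)
    assume "\<not> (\<exists>y\<in>k. y \<notin> legV as i1)"
    then have "k \<subseteq> legV as i1" by blast
    then have "card k \<le> as!i1" using card_mono[of "legV as i1" k] card_legV[of as i1] by simp
    then show False using fk(2) a_lt[OF i1(1)] by simp
  qed
  then obtain y where y: "y \<in> k" "y \<notin> legV as i1" by blast
  have yN: "y \<noteq> None" using y(1) nN by metis
  obtain i2 k2 where i2: "i2 < length as" "1 \<le> k2" "k2 \<le> as!i2" "y = Some (i2, k2)"
    using Vcases[OF _ yN] y fk(3) by blast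
  have "i1 \<noteq> i2" using y i2 by (auto simp: legV_def)
  then have "card {e \<in> spider_E as. e \<subseteq> k} + 2 \<le> card k"
    using count_two_legs[OF fk(1) nN, of i1 k1 i2 k2 as] \<open>v \<in> k\<close> i1(4) y(1) i2(4) by simp
  then show "card {e \<in> spider_E as. e \<subseteq> k} < s" using fk(2) by simp
qed

lemma all_None: "k \<in> KK \<Longrightarrow> None \<in> k"
proof (rule ccontr)
  assume k: "k \<in> KK" "None \<notin> k"
  have "s * p = card (spider_E as)" by (simp add: card_spider_E sumas)
  also have "\<dots> \<le> card (\<Union>k\<in>KK. {e \<in> spider_E as. e \<subseteq> k})"
    by (rule card_mono[OF _ Ecover]) (simp add: finKK)
  also have "\<dots> \<le> (\<Sum>k\<in>KK. card {e \<in> spider_E as. e \<subseteq> k})"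
    by (rule card_UN_le[OF finKK])
  also have "\<dots> < (\<Sum>k\<in>KK. s)"
    by (rule sum_strict_mono_ex1) (use finKK t_le k in auto)
  also have "\<dots> = s * p" using cardKK by simp
  finally show False by simp
qed

lemma d1: "v \<in> spider_V as \<Longrightarrow> v \<noteq> None \<Longrightarrow> d v = 1"
proof -
  assume v: "v \<in> spider_V as" "v \<noteq> None"
  have "None \<in> K v" using all_None v by (auto simp: KK_def)
  then have "{None, v} \<in> EG" using v(2) by (auto simp: K_def)
  then have "d v \<le> 1" using d_adj[OF _ NoneV] d_None by fastforce
  then show ?thesis using dpos[OF v] by simp
qed

end

context compl begin
lemma leg_const:
  assumes i: "i < length as"
  shows "Suc j \<le> as!i \<Longrightarrow> K (Some (i, Suc j)) = K (Some (i, 1))"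
proof (induction j)
  case 0
  then show ?case by simp
next
  case (Suc j)
  have e: "{Some (i, Suc j), Some (i, Suc (Suc j))} \<in> spider_E as"
    unfolding spider_E_eq legE_def using Suc.prems i
    by (intro UN_I[of i] image_eqI[of _ _ "Suc j"]) (simp_all add: vx_def)
  then have eG: "{Some (i, Suc (Suc j)), Some (i, Suc j)} \<in> EG" using E_EG by (auto simp: insert_commute)
  have V1: "Some (i, Suc j) \<in> spider_V as" using Suc.prems i by (auto simp: spider_V_def)
  have V2: "Some (i, Suc (Suc j)) \<in> spider_V as" using Suc.prems i by (auto simp: spider_V_def)
  have "d (Some (i, Suc (Suc j))) = d (Some (i, Suc j))" using d1 V1 V2 by simp
  then have "Some (i, Suc (Suc j)) \<in> K (Some (i, Suc j))" using eG by (simp add: K_def)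
  then have "K (Some (i, Suc (Suc j))) = K (Some (i, Suc j))"
    using K_eq[OF V1] \<open>d (Some (i, Suc (Suc j))) = d (Some (i, Suc j))\<close> by simp
  then show ?case using Suc by simp
qed

lemma assignment:
  "\<exists>(f :: nat \<Rightarrow> (nat \<times> nat) option set) Q. finite Q \<and> (\<forall>i<length as. f i \<in> Q) \<and>
       (\<forall>q\<in>Q. (\<Sum>i\<in>{i. i < length as \<and> f i = q}. as!i) = s)"
proof -
  define f where "f i = K (Some (i, 1))" for i
  define Q where "Q = f ` {..<length as}"
  have one: "1 \<le> as!i" if "i < length as" for i
  proof -
    have "s < 4 * as!i" using bnd nth_mem[OF that] by blast
    then show ?thesis by (cases "as!i") auto
  qed
  have Kf: "K x = f i" if "i < length as" "x \<in> legV as i" for i x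
  proof -
    from that(2) have "x \<in> Some ` ({i} \<times> {1..as!i})" by (simp add: legV_def)
    then obtain k where k: "x = Some (i, k)" "1 \<le> k" "k \<le> as!i" by auto
    have sk: "Suc (k - 1) = k" using k(2) by simp
    have "Suc (k - 1) \<le> as!i" using k by simp
    from leg_const[OF that(1) this] have "K (Some (i, Suc (k - 1))) = K (Some (i, 1))" .
    then show ?thesis using k(1) sk by (simp add: f_def)
  qed
  have "finite Q \<and> (\<forall>i<length as. f i \<in> Q) \<and>
       (\<forall>q\<in>Q. (\<Sum>i\<in>{i. i < length as \<and> f i = q}. as!i) = s)"
  proof (intro conjI allI impI ballI)
    show "finite Q" by (simp add: Q_def)
  next
    fix i assume "i < length as" then show "f i \<in> Q" by (simp add: Q_def)
  next
    fix q assume "q \<in> Q"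
    then obtain i0 where i0: "i0 < length as" "q = f i0" by (auto simp: Q_def)
    define v0 :: "(nat \<times> nat) option" where "v0 = Some (i0, 1)"
    have v0: "v0 \<in> spider_V as" "v0 \<noteq> None" using one[OF i0(1)] i0(1) unfolding v0_def spider_V_def by blast+
    have "{x \<in> spider_V as - {None}. K x = q} = (\<Union>i\<in>{i. i < length as \<and> f i = q}. legV as i)"
    proof
      show "{x \<in> spider_V as - {None}. K x = q} \<subseteq> (\<Union>i\<in>{i. i < length as \<and> f i = q}. legV as i)"
      proof
        fix x assume x: "x \<in> {x \<in> spider_V as - {None}. K x = q}"
        then have xV: "x \<in> spider_V as" "x \<noteq> None" "K x = q" by auto
        then obtain i where i: "i < length as" "x \<in> legV as i" unfolding spider_V_eq by blast
        have "f i = q" using Kf[OF i] xV(3) by simp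
        then show "x \<in> (\<Union>i\<in>{i. i < length as \<and> f i = q}. legV as i)" using i by blast
      qed
      show "(\<Union>i\<in>{i. i < length as \<and> f i = q}. legV as i) \<subseteq> {x \<in> spider_V as - {None}. K x = q}"
      proof
        fix x assume "x \<in> (\<Union>i\<in>{i. i < length as \<and> f i = q}. legV as i)"
        then obtain i where i: "i < length as" "f i = q" "x \<in> legV as i" by blast
        have "x \<in> spider_V as" using i unfolding spider_V_eq by blast
        moreover have "x \<noteq> None" using i(3) None_notin_legV by metis
        moreover have "K x = q" using Kf[OF i(1,3)] i(2) by simp
        ultimately show "x \<in> {x \<in> spider_V as - {None}. K x = q}" by blast
      qed
    qed
    moreover have "card (\<Union>i\<in>{i. i < length as \<and> f i = q}. legV as i) = (\<Sum>i\<in>{i. i < length as \<and> f i = q}. card (legV as i))"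
      by (rule card_UN_disjoint) (auto simp: legV_disj)
    ultimately have "(\<Sum>i\<in>{i. i < length as \<and> f i = q}. as!i) = card {x \<in> spider_V as - {None}. K x = q}"
      by (simp add: card_legV)
    also have "\<dots> = s"
    proof -
      have q: "q = K v0" using i0(2) unfolding f_def v0_def by blast
      show ?thesis unfolding q fiber[OF v0] by (rule Bl_card[OF v0])
    qed
    finally show "(\<Sum>i\<in>{i. i < length as \<and> f i = q}. as!i) = s" .
  qed
  then show ?thesis by blast
qed

end

theorem lemma8:
  fixes p s :: nat and as :: "nat list"
  assumes "p \<ge> 1" and "s > 0"
    and "length as = 3 * p"
    and "\<forall>a\<in>set as. s < 4 * a \<and> 2 * a < s"
    and "sum_list as = s * p"
  shows "((\<exists>P :: nat multiset multiset. size P = p \<and> sum_mset P = mset as \<and>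
              (\<forall>B\<in>#P. size B = 3 \<and> sum_mset B = s))
          \<longleftrightarrow> (\<exists>E'. is_completion_set (s + 1) (spider_V as) (spider_E as) E' \<and>
                    finite E' \<and> card E' = p * s * (s - 1) div 2))
       \<and> ((\<exists>P :: nat multiset multiset. size P = p \<and> sum_mset P = mset as \<and>
              (\<forall>B\<in>#P. size B = 3 \<and> sum_mset B = s))
          \<longleftrightarrow> (\<exists>F :: nat \<Rightarrow> (nat \<times> nat) option set set.
                 (\<Union>j<p. F j) = spider_E as \<and>
                 (\<forall>j<p. \<forall>k<p. j \<noteq> k \<longrightarrow> F j \<inter> F k = {}) \<and>
                 (\<forall>j<p. F j \<subseteq> spider_E as \<and> is_tree_edges (F j) \<and> card (F j) = s)))"
proof -
  let ?P = "\<exists>P :: nat multiset multiset. size P = p \<and> sum_mset P = mset as \<and>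
              (\<forall>B\<in>#P. size B = 3 \<and> sum_mset B = s)"
  have Pg: "\<exists>g. (\<forall>i<length as. g i < p) \<and>
             (\<forall>j<p. (\<Sum>i\<in>{i. i < length as \<and> g i = j}. as!i) = s)" if ?P
  proof -
    from that obtain P :: "nat multiset multiset" where P: "size P = p" "sum_mset P = mset as"
      "\<forall>B\<in>#P. size B = 3 \<and> sum_mset B = s" by blast
    show ?thesis by (rule from_P[OF P(1,2)]) (use P(3) in blast)
  qed
  have gP: ?P if "\<forall>i<length as. g i < p" "\<forall>j<p. (\<Sum>i\<in>{i. i < length as \<and> g i = j}. as!i) = s"
    for g :: "nat \<Rightarrow> nat"
    by (rule build_P[of "{..<p}" as g s p]) (use that assms in auto)
  have part1: "?P \<longleftrightarrow> (\<exists>E'. is_completion_set (s + 1) (spider_V as) (spider_E as) E' \<and>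
                    finite E' \<and> card E' = p * s * (s - 1) div 2)"
  proof
    assume ?P
    then obtain g where g: "\<forall>i<length as. g i < p"
      "\<forall>j<p. (\<Sum>i\<in>{i. i < length as \<and> g i = j}. as!i) = s" using Pg by blast
    show "\<exists>E'. is_completion_set (s + 1) (spider_V as) (spider_E as) E' \<and>
                    finite E' \<and> card E' = p * s * (s - 1) div 2"
      by (rule from_g_completion[OF g assms(2)])
  next
    assume "\<exists>E'. is_completion_set (s + 1) (spider_V as) (spider_E as) E' \<and>
                    finite E' \<and> card E' = p * s * (s - 1) div 2"
    then obtain E' where E': "is_completion_set (s + 1) (spider_V as) (spider_E as) E'"
      "finite E'" "card E' = p * s * (s - 1) div 2" by blast
    interpret compl as s p E'
      by unfold_locales (use assms E' in auto)
    obtain f :: "nat \<Rightarrow> (nat \<times> nat) option set" and Q where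
      fQ: "finite Q" "\<forall>i<length as. f i \<in> Q" "\<forall>q\<in>Q. (\<Sum>i\<in>{i. i < length as \<and> f i = q}. as!i) = s"
      using assignment by blast
    show ?P by (rule build_P[OF fQ assms(3,4,2)])
  qed
  have part2: "?P \<longleftrightarrow> (\<exists>F :: nat \<Rightarrow> (nat \<times> nat) option set set.
                 (\<Union>j<p. F j) = spider_E as \<and>
                 (\<forall>j<p. \<forall>k<p. j \<noteq> k \<longrightarrow> F j \<inter> F k = {}) \<and>
                 (\<forall>j<p. F j \<subseteq> spider_E as \<and> is_tree_edges (F j) \<and> card (F j) = s))"
  proof
    assume ?P
    then obtain g where g: "\<forall>i<length as. g i < p"
      "\<forall>j<p. (\<Sum>i\<in>{i. i < length as \<and> g i = j}. as!i) = s" using Pg by blast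
    show "\<exists>F :: nat \<Rightarrow> (nat \<times> nat) option set set.
                 (\<Union>j<p. F j) = spider_E as \<and>
                 (\<forall>j<p. \<forall>k<p. j \<noteq> k \<longrightarrow> F j \<inter> F k = {}) \<and>
                 (\<forall>j<p. F j \<subseteq> spider_E as \<and> is_tree_edges (F j) \<and> card (F j) = s)"
      by (rule from_g_trees[OF g assms(2)])
  next
    assume "\<exists>F :: nat \<Rightarrow> (nat \<times> nat) option set set.
                 (\<Union>j<p. F j) = spider_E as \<and>
                 (\<forall>j<p. \<forall>k<p. j \<noteq> k \<longrightarrow> F j \<inter> F k = {}) \<and>
                 (\<forall>j<p. F j \<subseteq> spider_E as \<and> is_tree_edges (F j) \<and> card (F j) = s)"
    then obtain F :: "nat \<Rightarrow> (nat \<times> nat) option set set" where F: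
      "(\<Union>j<p. F j) = spider_E as" "\<forall>j<p. \<forall>k<p. j \<noteq> k \<longrightarrow> F j \<inter> F k = {}"
      "\<forall>j<p. F j \<subseteq> spider_E as \<and> is_tree_edges (F j) \<and> card (F j) = s" by blast
    obtain f where f: "\<forall>i<length as. f i < p" "\<forall>j<p. (\<Sum>i\<in>{i. i < length as \<and> f i = j}. as!i) = s"
      using from_trees[OF F assms(4)] by blast
    show ?P by (rule gP[OF f])
  qed
  show ?thesis using part1 part2 by blast
qed

end
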